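(* Let $X$ be a compact metric space and suppose $f:X\to X$ is a continuous map that is sensitive, minimal, and has the shadowing property. Then there are a sequence $\alpha$ of prime numbers and a continuous map $\pi:X\to\Delta_\alpha$ such that $g_\alpha\circ\pi=\pi\circ f$ and $\pi$ is one-to-one on a dense subset of $X$.
   Context: $f$ is minimal if $\overline{\{f^n(x):n\ge0\}}=X$ for all $x\in X$. $f$ is sensitive if there is $\delta>0$ such that for every nonempty open $U\subseteq X$ there is $n>0$ with $\mathrm{diam}(f^n(U))>\delta$. A sequence $(x_n)_{n\ge0}$ is a $\delta$-pseudo-orbit if $d(f(x_n),x_{n+1})\le\delta$ for all $n$; $f$ has the shadowing property if for every $\epsilon>0$ there is $\delta>0$ such that for every $\delta$-pseudo-orbit $(x_n)$ there is $y\in X$ with $d(f^n(y),x_n)<\epsilon$ for all $n\ge0$. For $\alpha=(j_1,j_2,\dots)$ with integers $j_i\ge2$, $\Delta_\alpha$ is the set of sequences $(r_1,r_2,\dots)$ with $r_i\in\{0,\dots,j_i-1\}$, with metric $d_\alpha(r,s)=\sum_i\delta(r_i,s_i)/2^i$ ($\delta(a,b)=1$ if $a\ne b$, else $0$), and $g_\alpha:\Delta_\alpha\to\Delta_\alpha$ is the adding machine map $r\mapsto r+(1,0,0,\dots)$, addition being coordinatewise with carry (first coordinate mod $j_1$, carry into the second coordinate taken mod $j_2$, etc.). *)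

theory Defs
  imports "HOL-Analysis.Analysis" "HOL-Computational_Algebra.Primes"
begin

definition minimal_on :: "'a::metric_space set \<Rightarrow> ('a \<Rightarrow> 'a) \<Rightarrow> bool" where
  "minimal_on X f \<longleftrightarrow> (\<forall>x\<in>X. closure {(f ^^ n) x | n. True} = X)"

definition sensitive_on :: "'a::metric_space set \<Rightarrow> ('a \<Rightarrow> 'a) \<Rightarrow> bool" where
  "sensitive_on X f \<longleftrightarrow> (\<exists>\<delta>>0. \<forall>U. openin (top_of_set X) U \<and> U \<noteq> {} \<longrightarrow>
      (\<exists>n>0. diameter ((f ^^ n) ` U) > \<delta>))"

definition shadowing_on :: "'a::metric_space set \<Rightarrow> ('a \<Rightarrow> 'a) \<Rightarrow> bool" where
  "shadowing_on X f \<longleftrightarrow> (\<forall>\<epsilon>>0. \<exists>\<delta>>0. \<forall>xs::nat \<Rightarrow> 'a.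
      ((\<forall>n. xs n \<in> X) \<and> (\<forall>n. dist (f (xs n)) (xs (Suc n)) \<le> \<delta>)) \<longrightarrow>
      (\<exists>y\<in>X. \<forall>n. dist ((f ^^ n) y) (xs n) < \<epsilon>))"

(* Odometer space Delta_alpha; coordinates indexed from 0 (coordinate i here is r_(i+1)) *)

definition Delta :: "(nat \<Rightarrow> nat) \<Rightarrow> (nat \<Rightarrow> nat) set" where
  "Delta \<alpha> = {r. \<forall>i. r i < \<alpha> i}"

definition dist_alpha :: "(nat \<Rightarrow> nat) \<Rightarrow> (nat \<Rightarrow> nat) \<Rightarrow> real" where
  "dist_alpha r s = (\<Sum>i. (if r i \<noteq> s i then 1 else 0) / 2 ^ (Suc i))"

fun carry :: "(nat \<Rightarrow> nat) \<Rightarrow> (nat \<Rightarrow> nat) \<Rightarrow> nat \<Rightarrow> nat" where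
  "carry \<alpha> r 0 = 1"
| "carry \<alpha> r (Suc i) = (if r i + carry \<alpha> r i \<ge> \<alpha> i then 1 else 0)"

definition g_alpha :: "(nat \<Rightarrow> nat) \<Rightarrow> (nat \<Rightarrow> nat) \<Rightarrow> (nat \<Rightarrow> nat)" where
  "g_alpha \<alpha> r = (\<lambda>i. (r i + carry \<alpha> r i) mod \<alpha> i)"

definition continuous_into_Delta :: "'a::metric_space set \<Rightarrow> ('a \<Rightarrow> nat \<Rightarrow> nat) \<Rightarrow> bool" where
  "continuous_into_Delta X \<pi> \<longleftrightarrow> (\<forall>x\<in>X. \<forall>e>0. \<exists>d>0. \<forall>y\<in>X.
      dist y x < d \<longrightarrow> dist_alpha (\<pi> y) (\<pi> x) < e)"

end

theory Submission imports Defs begin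

lemma diameter_le_metric:
  fixes S :: "'a::metric_space set"
  assumes "0 \<le> d" "\<And>x y. x \<in> S \<Longrightarrow> y \<in> S \<Longrightarrow> dist x y \<le> d"
  shows "diameter S \<le> d"
  using assms by (auto simp: diameter_def intro: cSUP_least)

inductive ch :: "'a::metric_space set \<Rightarrow> ('a \<Rightarrow> 'a) \<Rightarrow> real \<Rightarrow> 'a \<Rightarrow> 'a \<Rightarrow> nat \<Rightarrow> bool"
  for X f e where
  base: "x \<in> X \<Longrightarrow> ch X f e x x 0"
| step: "ch X f e x y k \<Longrightarrow> z \<in> X \<Longrightarrow> dist (f y) z < e \<Longrightarrow> ch X f e x z (Suc k)"

lemma ch_in: "ch X f e x y k \<Longrightarrow> x \<in> X \<and> y \<in> X"
  by (induction rule: ch.induct) auto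

lemma ch_trans: "ch X f e y z b \<Longrightarrow> ch X f e x y a \<Longrightarrow> ch X f e x z (a + b)"
  by (induction rule: ch.induct) (auto intro: ch.step)

lemma ch_mono: "ch X f e x y k \<Longrightarrow> e \<le> e' \<Longrightarrow> ch X f e' x y k"
  by (induction rule: ch.induct) (auto intro: ch.intros)

lemma ch_Suc_inv: "ch X f e x z (Suc k) \<Longrightarrow> \<exists>y. ch X f e x y k \<and> z \<in> X \<and> dist (f y) z < e"
  by (erule ch.cases) auto

lemma ch_seq: "ch X f e x y k \<Longrightarrow> \<exists>xs. xs 0 = x \<and> xs k = y \<and> (\<forall>i\<le>k. xs i \<in> X) \<and>
   (\<forall>i<k. dist (f (xs i)) (xs (Suc i)) < e)"
proof (induction rule: ch.induct)
  case (base x)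
  then show ?case by (intro exI[of _ "\<lambda>_. x"]) auto
next
  case (step x y k z)
  then obtain xs where xs: "xs 0 = x" "xs k = y" "\<forall>i\<le>k. xs i \<in> X" "\<forall>i<k. dist (f (xs i)) (xs (Suc i)) < e" by blast
  show ?case
    apply (intro exI[of _ "xs(Suc k := z)"])
    using xs step.hyps by (auto simp: le_Suc_eq less_Suc_eq)
qed

lemma ch_mult: "ch X f e x x p \<Longrightarrow> ch X f e x x (q * p)"
proof (induction q)
  case 0 then show ?case using ch_in[OF 0] by (simp add: ch.base)
next
  case (Suc q)
  have "ch X f e x x (q * p + p)" by (rule ch_trans[OF Suc.prems Suc.IH[OF Suc.prems]])
  then show ?case by (simp add: add.commute)
qed

lemma funpow_in: "f ` X \<subseteq> X \<Longrightarrow> x \<in> X \<Longrightarrow> (f ^^ n) x \<in> X"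
  by (induction n) auto

lemma ch_orbit: "f ` X \<subseteq> X \<Longrightarrow> x \<in> X \<Longrightarrow> e > 0 \<Longrightarrow> ch X f e x ((f ^^ n) x) n"
proof (induction n)
  case 0 then show ?case by (auto intro: ch.base)
next
  case (Suc n)
  have "(f ^^ Suc n) x \<in> X" using funpow_in[OF Suc.prems(1,2)] .
  moreover have "dist (f ((f ^^ n) x)) ((f ^^ Suc n) x) < e" using Suc.prems by simp
  ultimately show ?case using ch.step[OF Suc.IH[OF Suc.prems]] by blast
qed

lemma continuous_on_funpow: "f ` X \<subseteq> X \<Longrightarrow> continuous_on X f \<Longrightarrow> continuous_on X (f ^^ n)"
proof (induction n)
  case 0 then show ?case by (simp add: continuous_on_id)
next
  case (Suc n)
  have "continuous_on X (f \<circ> (f ^^ n))"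
    by (rule continuous_on_compose) (use Suc funpow_in[of f X] in \<open>auto intro: continuous_on_subset\<close>)
  then show ?case by simp
qed

locale dyn =
  fixes X :: "'a::metric_space set" and f :: "'a \<Rightarrow> 'a" and x0 :: 'a
  assumes cpt: "compact X" and fX: "f ` X \<subseteq> X" and cont: "continuous_on X f"
    and mini: "minimal_on X f" and x0X: "x0 \<in> X"
begin

lemma reach:
  assumes "e > 0" "x \<in> X" "y \<in> X"
  shows "\<exists>k. ch X f e x y (Suc k)"
proof -
  have "f x \<in> X" using fX assms by auto
  then have "closure {(f ^^ n) (f x) | n. True} = X" using mini by (auto simp: minimal_on_def)
  with assms have "y \<in> closure {(f ^^ n) (f x) | n. True}" by simp
  then obtain z where "z \<in> {(f ^^ n) (f x) | n. True}" "dist z y < e"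
    using assms(1) by (auto simp: closure_approachable)
  then obtain n where z: "z = (f ^^ n) (f x)" by auto
  have "ch X f e x ((f ^^ n) x) n" by (rule ch_orbit[OF fX assms(2,1)])
  moreover have "dist (f ((f ^^ n) x)) y < e" using z \<open>dist z y < e\<close> by (simp add: funpow_swap1)
  ultimately have "ch X f e x y (Suc n)" using ch.step assms(3) by blast
  then show ?thesis by blast
qed

definition H :: "real \<Rightarrow> int set" where
  "H e = {int P - int Q | P Q. ch X f e x0 x0 P \<and> ch X f e x0 x0 Q}"

definition per :: "real \<Rightarrow> nat" where
  "per e = (LEAST n. n > 0 \<and> int n \<in> H e)"

definition cyc :: "real \<Rightarrow> 'a \<Rightarrow> nat" where
  "cyc e y = (SOME k. ch X f e x0 y k) mod per e"

lemma H_zero: "0 \<in> H e"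
  unfolding H_def using ch.base[OF x0X, of f e] by force

lemma H_pos: "e > 0 \<Longrightarrow> \<exists>n>0. int n \<in> H e"
proof -
  assume "e > 0"
  then obtain k where "ch X f e x0 x0 (Suc k)" using reach x0X by blast
  moreover have "ch X f e x0 x0 0" using ch.base[OF x0X] .
  ultimately have "int (Suc k) - int 0 \<in> H e" unfolding H_def by blast
  then show ?thesis by (intro exI[of _ "Suc k"]) auto
qed

lemma per_props: "e > 0 \<Longrightarrow> per e > 0 \<and> int (per e) \<in> H e"
  unfolding per_def using H_pos by (metis (mono_tags, lifting) LeastI_ex)

lemma H_diff: "a \<in> H e \<Longrightarrow> b \<in> H e \<Longrightarrow> a - b \<in> H e"
proof -
  assume "a \<in> H e" "b \<in> H e"
  then obtain P Q P' Q' where a: "a = int P - int Q" "ch X f e x0 x0 P" "ch X f e x0 x0 Q"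
    and b: "b = int P' - int Q'" "ch X f e x0 x0 P'" "ch X f e x0 x0 Q'"
    unfolding H_def by blast
  have "ch X f e x0 x0 (P + Q')" using ch_trans[OF b(3) a(2)] .
  moreover have "ch X f e x0 x0 (Q + P')" using ch_trans[OF b(2) a(3)] .
  moreover have "a - b = int (P + Q') - int (Q + P')" using a b by simp
  ultimately show ?thesis unfolding H_def by blast
qed

lemma H_nmult: "a \<in> H e \<Longrightarrow> int q * a \<in> H e"
proof -
  assume "a \<in> H e"
  then obtain P Q where a: "a = int P - int Q" "ch X f e x0 x0 P" "ch X f e x0 x0 Q"
    unfolding H_def by blast
  have "int q * a = int (q * P) - int (q * Q)" unfolding a(1) by (simp add: right_diff_distrib)
  then show ?thesis using ch_mult[OF a(2)] ch_mult[OF a(3)] unfolding H_def by blast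
qed

lemma H_imult: "a \<in> H e \<Longrightarrow> (z::int) * a \<in> H e"
proof (cases "z \<ge> 0")
  case True
  assume "a \<in> H e"
  then show ?thesis using H_nmult[of a e "nat z"] True by simp
next
  case False
  assume "a \<in> H e"
  then have "int (nat (-z)) * a \<in> H e" by (rule H_nmult)
  then have "0 - int (nat (-z)) * a \<in> H e" using H_zero H_diff by blast
  then show ?thesis using False by simp
qed

lemma per_dvd: assumes "e > 0" "h \<in> H e" shows "int (per e) dvd h"
proof -
  define m where "m = per e"
  have m: "m > 0" "int m \<in> H e" using per_props[OF assms(1)] m_def by auto
  have "h - (h div int m) * int m \<in> H e" using H_diff[OF assms(2) H_imult[OF m(2)]] .
  then have hm: "h mod int m \<in> H e" by (simp add: minus_div_mult_eq_mod)
  have "h mod int m = 0"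
  proof (rule ccontr)
    assume "h mod int m \<noteq> 0"
    moreover have "h mod int m \<ge> 0" "h mod int m < int m" using m by auto
    ultimately have "nat (h mod int m) > 0 \<and> int (nat (h mod int m)) \<in> H e" using hm by auto
    then have "m \<le> nat (h mod int m)" unfolding m_def per_def by (rule Least_le)
    with \<open>h mod int m < int m\<close> \<open>h mod int m \<ge> 0\<close> show False by (simp add: le_nat_iff)
  qed
  then show ?thesis unfolding m_def by auto
qed

lemma ch_cong:
  assumes e: "e > 0" and k: "ch X f e x0 y k" and k': "ch X f e x0 y k'"
  shows "k mod per e = k' mod per e"
proof -
  have yX: "y \<in> X" using ch_in[OF k] by simp
  obtain j where j: "ch X f e y x0 (Suc j)" using reach[OF e yX x0X] by blast
  have "int (k + Suc j) - int (k' + Suc j) \<in> H e"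
    using ch_trans[OF j k] ch_trans[OF j k'] unfolding H_def by blast
  then have "int (per e) dvd int k - int k'" using per_dvd[OF e] by simp
  then have "int k mod int (per e) = int k' mod int (per e)" by (simp add: mod_eq_dvd_iff)
  then show ?thesis by (metis of_nat_eq_iff of_nat_mod)
qed

lemma cyc_eq: assumes "e > 0" "ch X f e x0 y k" shows "cyc e y = k mod per e"
proof -
  have "ch X f e x0 y (SOME k. ch X f e x0 y k)" using assms(2) by (rule someI)
  then show ?thesis unfolding cyc_def using ch_cong[OF assms(1)] assms(2) by blast
qed

lemma cyc_lt: "e > 0 \<Longrightarrow> cyc e y < per e"
  unfolding cyc_def using per_props by auto

lemma cyc_x0: "e > 0 \<Longrightarrow> cyc e x0 = 0"
  using cyc_eq[OF _ ch.base[OF x0X]] by simp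

lemma cyc_f: assumes e: "e > 0" and y: "y \<in> X" shows "cyc e (f y) = Suc (cyc e y) mod per e"
proof -
  obtain k where k: "ch X f e x0 y (Suc k)" using reach[OF e x0X y] by blast
  have "ch X f e x0 (f y) (Suc (Suc k))" using ch.step[OF k, of "f y"] fX y e by auto
  then show ?thesis using cyc_eq[OF e k] cyc_eq[OF e] by (simp add: mod_Suc_eq)
qed

lemma cyc_loc: assumes e: "e > 0" and y: "y \<in> X"
  shows "\<exists>r>0. \<forall>z\<in>X. dist z y < r \<longrightarrow> cyc e z = cyc e y"
proof -
  obtain k where k: "ch X f e x0 y (Suc k)" using reach[OF e x0X y] by blast
  then obtain w where w: "ch X f e x0 w k" "dist (f w) y < e" using ch_Suc_inv by blast
  show ?thesis
  proof (intro exI[of _ "e - dist (f w) y"] conjI ballI impI)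
    show "e - dist (f w) y > 0" using w by simp
    fix z assume z: "z \<in> X" "dist z y < e - dist (f w) y"
    have "dist (f w) z < e" using z dist_triangle[of "f w" z y] by (simp add: dist_commute)
    then have "ch X f e x0 z (Suc k)" using ch.step[OF w(1) z(1)] by blast
    then show "cyc e z = cyc e y" using cyc_eq[OF e] k by simp
  qed
qed

lemma per_mono: assumes "0 < e'" "e' \<le> e" shows "per e dvd per e'"
proof -
  have "int (per e') \<in> H e'" using per_props assms by auto
  then have "int (per e') \<in> H e" unfolding H_def using ch_mono[OF _ assms(2)] by blast
  moreover have "e > 0" using assms by simp
  ultimately have "int (per e) dvd int (per e')" using per_dvd by blast
  then show ?thesis by simp
qed

lemma cyc_compat: assumes "0 < e'" "e' \<le> e" "y \<in> X" shows "cyc e' y mod per e = cyc e y"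
proof -
  obtain k where k: "ch X f e' x0 y (Suc k)" using reach[OF assms(1) x0X assms(3)] by blast
  have "cyc e' y = Suc k mod per e'" using cyc_eq[OF assms(1) k] .
  moreover have "cyc e y = Suc k mod per e" using cyc_eq[OF _ ch_mono[OF k assms(2)]] assms by simp
  ultimately show ?thesis using per_mono[OF assms(1,2)] by (simp add: mod_mod_cancel)
qed

lemma X_closed: "closed X" using cpt by (rule compact_imp_closed)

lemma f_surj: "f ` X = X"
proof
  show "f ` X \<subseteq> X" by (rule fX)
  have cl: "closed (f ` X)" using compact_continuous_image[OF cont cpt] by (rule compact_imp_closed)
  have "{(f ^^ n) (f x0) | n. True} \<subseteq> f ` X"
    using funpow_in[OF fX x0X] by (auto simp: funpow_swap1[symmetric])
  then have "closure {(f ^^ n) (f x0) | n. True} \<subseteq> f ` X" using cl by (rule closure_minimal)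
  moreover have "closure {(f ^^ n) (f x0) | n. True} = X" using mini fX x0X by (auto simp: minimal_on_def)
  ultimately show "X \<subseteq> f ` X" by simp
qed

lemma funpow_surj: "(f ^^ n) ` X = X"
proof (induction n)
  case 0 then show ?case by simp
next
  case (Suc n)
  have "(f ^^ Suc n) ` X = f ` ((f ^^ n) ` X)" by (simp add: image_comp)
  then show ?case using Suc f_surj by simp
qed

lemma loop_close:
  assumes eps: "\<epsilon> > 0" and e: "e > 0"
    and sh: "\<forall>xs::nat \<Rightarrow> 'a. ((\<forall>n. xs n \<in> X) \<and> (\<forall>n. dist (f (xs n)) (xs (Suc n)) \<le> e)) \<longrightarrow>
      (\<exists>y\<in>X. \<forall>n. dist ((f ^^ n) y) (xs n) < \<epsilon>)"
    and p: "ch X f e x0 x0 p"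
  shows "\<forall>x\<in>X. dist ((f ^^ p) x) x \<le> 2 * \<epsilon>"
proof (cases "p = 0")
  case True then show ?thesis using eps by simp
next
  case False
  then have pp: "p > 0" by simp
  obtain xs where xs: "xs 0 = x0" "xs p = x0" "\<forall>i\<le>p. xs i \<in> X"
    "\<forall>i<p. dist (f (xs i)) (xs (Suc i)) < e" using ch_seq[OF p] by blast
  define ys where "ys n = xs (n mod p)" for n
  have ysX: "\<forall>n. ys n \<in> X" using xs(3) pp unfolding ys_def by (simp add: less_imp_le)
  have "dist (f (ys n)) (ys (Suc n)) \<le> e" for n
  proof (cases "Suc (n mod p) = p")
    case True
    then have "ys (Suc n) = xs p" using xs(1,2) unfolding ys_def by (simp add: mod_Suc)
    then show ?thesis using xs(4) True pp unfolding ys_def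
      by (metis lessI less_imp_le)
  next
    case False
    then have "ys (Suc n) = xs (Suc (n mod p))" unfolding ys_def by (simp add: mod_Suc)
    then show ?thesis using xs(4) pp unfolding ys_def
      by (metis less_imp_le mod_less_divisor)
  qed
  then obtain y where y: "y \<in> X" "\<forall>n. dist ((f ^^ n) y) (ys n) < \<epsilon>" using sh ysX by blast
  define C where "C = {z \<in> X. dist ((f ^^ p) z) z \<le> 2 * \<epsilon>}"
  have "continuous_on X (\<lambda>z. dist ((f ^^ p) z) z)"
    by (intro continuous_on_dist continuous_on_funpow[OF fX cont] continuous_on_id)
  then have "closed (X \<inter> (\<lambda>z. dist ((f ^^ p) z) z) -` {..2*\<epsilon>})"
    by (rule continuous_closed_preimage[OF _ X_closed]) simp
  moreover have "C = X \<inter> (\<lambda>z. dist ((f ^^ p) z) z) -` {..2*\<epsilon>}" unfolding C_def by auto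
  ultimately have Ccl: "closed C" by simp
  have "{(f ^^ n) y | n. True} \<subseteq> C"
  proof safe
    fix n
    have "(f ^^ p) ((f ^^ n) y) = (f ^^ (p + n)) y" by (simp add: funpow_add)
    moreover have "ys (p + n) = ys n" unfolding ys_def by simp
    ultimately have "dist ((f ^^ p) ((f ^^ n) y)) (ys n) < \<epsilon>" using y(2)[rule_format, of "p+n"] by simp
    moreover have "dist ((f ^^ n) y) (ys n) < \<epsilon>" using y(2) by simp
    ultimately have "dist ((f ^^ p) ((f ^^ n) y)) ((f ^^ n) y) \<le> 2 * \<epsilon>"
      using dist_triangle[of "(f ^^ p) ((f ^^ n) y)" "(f ^^ n) y" "ys n"] by (simp add: dist_commute)
    then show "(f ^^ n) y \<in> C" unfolding C_def using funpow_in[OF fX y(1)] by simp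
  qed
  then have "closure {(f ^^ n) y | n. True} \<subseteq> C" using Ccl by (rule closure_minimal)
  moreover have "closure {(f ^^ n) y | n. True} = X" using mini y(1) by (auto simp: minimal_on_def)
  ultimately show ?thesis unfolding C_def by auto
qed

lemma mult_close:
  assumes eps: "\<epsilon> > 0" and e: "e > 0"
    and sh: "\<forall>xs::nat \<Rightarrow> 'a. ((\<forall>n. xs n \<in> X) \<and> (\<forall>n. dist (f (xs n)) (xs (Suc n)) \<le> e)) \<longrightarrow>
      (\<exists>y\<in>X. \<forall>n. dist ((f ^^ n) y) (xs n) < \<epsilon>)"
  shows "\<forall>z\<in>X. dist ((f ^^ (q * per e)) z) z \<le> 4 * \<epsilon>"
proof
  fix z assume z: "z \<in> X"
  have "int (per e) \<in> H e" using per_props[OF e] by simp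
  then obtain P Q where PQ: "int (per e) = int P - int Q" "ch X f e x0 x0 P" "ch X f e x0 x0 Q"
    unfolding H_def by blast
  have P: "P = per e + Q" using PQ(1) by linarith
  obtain x where x: "x \<in> X" "z = (f ^^ (q * Q)) x" using funpow_surj[of "q * Q"] z by blast
  have qP: "q * P = q * per e + q * Q" using P by (simp add: algebra_simps)
  have "(f ^^ (q * per e)) z = (f ^^ (q * P)) x" unfolding x(2) qP funpow_add comp_apply ..
  moreover have "dist ((f ^^ (q * P)) x) x \<le> 2 * \<epsilon>"
    using loop_close[OF eps e sh ch_mult[OF PQ(2)]] x(1) by blast
  moreover have "dist ((f ^^ (q * Q)) x) x \<le> 2 * \<epsilon>"
    using loop_close[OF eps e sh ch_mult[OF PQ(3)]] x(1) by blast
  ultimately show "dist ((f ^^ (q * per e)) z) z \<le> 4 * \<epsilon>"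
    using dist_triangle[of "(f ^^ (q * P)) x" z x] x(2) by (simp add: dist_commute)
qed

lemma unif_family:
  assumes "d > 0"
  shows "\<exists>\<rho>>0. \<forall>r\<le>B. \<forall>x\<in>X. \<forall>y\<in>X. dist x y < \<rho> \<longrightarrow> dist ((f ^^ r) x) ((f ^^ r) y) < d"
proof (induction B)
  case 0 then show ?case using assms by (intro exI[of _ d]) auto
next
  case (Suc B)
  then obtain \<rho> where \<rho>: "\<rho> > 0" "\<forall>r\<le>B. \<forall>x\<in>X. \<forall>y\<in>X. dist x y < \<rho> \<longrightarrow> dist ((f ^^ r) x) ((f ^^ r) y) < d"
    by blast
  have "uniformly_continuous_on X (f ^^ Suc B)"
    by (rule compact_uniformly_continuous[OF continuous_on_funpow[OF fX cont] cpt])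
  then obtain \<rho>' where \<rho>': "\<rho>' > 0" "\<forall>x\<in>X. \<forall>y\<in>X. dist y x < \<rho>' \<longrightarrow> dist ((f ^^ Suc B) y) ((f ^^ Suc B) x) < d"
    using assms unfolding uniformly_continuous_on_def by metis
  show ?case
  proof (intro exI[of _ "min \<rho> \<rho>'"] conjI allI impI ballI)
    show "min \<rho> \<rho>' > 0" using \<rho> \<rho>' by simp
    fix r x y assume r: "r \<le> Suc B" and xy: "x \<in> X" "y \<in> X" "dist x y < min \<rho> \<rho>'"
    show "dist ((f ^^ r) x) ((f ^^ r) y) < d"
    proof (cases "r = Suc B")
      case True then show ?thesis using \<rho>'(2) xy by auto
    next
      case False then show ?thesis using \<rho>(2) r xy by auto
    qed
  qed
qed

lemma per_unbounded:
  assumes sens: "sensitive_on X f" and shad: "shadowing_on X f"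
  shows "\<exists>e>0. per e > B"
proof (rule ccontr)
  assume "\<not> ?thesis"
  then have bnd: "\<And>e. e > 0 \<Longrightarrow> per e \<le> B" by (meson not_le)
  obtain \<delta> where \<delta>: "\<delta> > 0" "\<And>U. openin (top_of_set X) U \<Longrightarrow> U \<noteq> {} \<Longrightarrow> \<exists>n>0. diameter ((f ^^ n) ` U) > \<delta>"
    using sens unfolding sensitive_on_def by blast
  obtain \<rho> where \<rho>: "\<rho> > 0" "\<forall>r\<le>B. \<forall>x\<in>X. \<forall>y\<in>X. dist x y < \<rho> \<longrightarrow> dist ((f ^^ r) x) ((f ^^ r) y) < \<delta>/3"
    using unif_family[of "\<delta>/3" B] \<delta>(1) by auto
  define \<epsilon> where "\<epsilon> = \<rho> / 16"
  have eps: "\<epsilon> > 0" using \<rho> unfolding \<epsilon>_def by simp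
  obtain e where e: "e > 0" and sh: "\<forall>xs::nat \<Rightarrow> 'a. ((\<forall>n. xs n \<in> X) \<and> (\<forall>n. dist (f (xs n)) (xs (Suc n)) \<le> e)) \<longrightarrow>
      (\<exists>y\<in>X. \<forall>n. dist ((f ^^ n) y) (xs n) < \<epsilon>)"
    using shad eps unfolding shadowing_on_def by blast
  define m where "m = per e"
  have m: "m > 0" "m \<le> B" using per_props[OF e] bnd[OF e] m_def by auto
  define U where "U = X \<inter> ball x0 (\<rho>/2)"
  have "openin (top_of_set X) U" unfolding U_def by auto
  moreover have "U \<noteq> {}" unfolding U_def using x0X \<rho> by auto
  ultimately obtain n where n: "n > 0" "diameter ((f ^^ n) ` U) > \<delta>" using \<delta>(2) by blast
  define r where "r = n mod m"
  define q where "q = n div m"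
  have nqr: "n = r + q * m" unfolding r_def q_def by simp
  have r: "r \<le> B" using m unfolding r_def by (meson le_trans less_imp_le mod_less_divisor)
  have close: "dist ((f ^^ n) u) ((f ^^ r) x0) < \<delta>/3" if u: "u \<in> U" for u
  proof -
    define w where "w = (f ^^ (q * m)) u"
    have uX: "u \<in> X" and ux: "dist x0 u < \<rho>/2" using u unfolding U_def by auto
    have wX: "w \<in> X" unfolding w_def using funpow_in[OF fX uX] .
    have "dist w u \<le> 4 * \<epsilon>" unfolding w_def m_def using mult_close[OF eps e sh] uX by blast
    then have "dist w x0 < \<rho>" using ux dist_triangle[of w x0 u] unfolding \<epsilon>_def by (simp add: dist_commute) (smt (verit) zero_le_dist)
    then have "dist ((f ^^ r) w) ((f ^^ r) x0) < \<delta>/3" using \<rho>(2) r wX x0X by blast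
    moreover have "(f ^^ n) u = (f ^^ r) w" unfolding w_def nqr funpow_add comp_apply ..
    ultimately show ?thesis by simp
  qed
  have "diameter ((f ^^ n) ` U) \<le> 2 * (\<delta>/3)"
  proof (rule diameter_le_metric)
    show "0 \<le> 2 * (\<delta>/3)" using \<delta> by simp
    fix a b assume "a \<in> (f ^^ n) ` U" "b \<in> (f ^^ n) ` U"
    then obtain u v where "u \<in> U" "v \<in> U" "a = (f ^^ n) u" "b = (f ^^ n) v" by blast
    then show "dist a b \<le> 2 * (\<delta>/3)"
      using close[of u] close[of v] dist_triangle[of a b "(f ^^ r) x0"] by (simp add: dist_commute)
  qed
  then show False using n \<delta> by simp
qed

end

lemma digit_lemma: "((a::nat) mod (M * b)) div M = (a div M) mod b" if "M > 0"
  using that by (simp add: mod_mult2_eq)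

definition nextp :: "(nat \<Rightarrow> nat) \<Rightarrow> nat \<Rightarrow> nat" where
  "nextp N M = (SOME p. prime p \<and> (\<exists>j. M * p dvd N j))"

primrec Ms :: "(nat \<Rightarrow> nat) \<Rightarrow> nat \<Rightarrow> nat" where
  "Ms N 0 = 1"
| "Ms N (Suc k) = Ms N k * nextp N (Ms N k)"

lemma prime_chain:
  assumes pos: "\<And>j. N j > 0" and mono: "\<And>j j'. j \<le> j' \<Longrightarrow> N j dvd N j'"
    and unb: "\<And>B. \<exists>j. N j > B"
  shows "(\<exists>j. Ms N k dvd N j) \<and> prime (nextp N (Ms N k))"
proof -
  have step: "prime (nextp N M) \<and> (\<exists>j. M * nextp N M dvd N j)" if "M dvd N j0" for M j0
  proof -
    obtain j1 where j1: "N j1 > M" using unb by blast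
    define j where "j = max j0 j1"
    have d1: "N j1 dvd N j" using mono[of j1 j] unfolding j_def by simp
    have d0: "N j0 dvd N j" using mono[of j0 j] unfolding j_def by simp
    have "N j1 \<le> N j" using dvd_imp_le[OF d1 pos[of j]] .
    with j1 have gt: "N j > M" by simp
    have "M dvd N j" using that d0 by (rule dvd_trans)
    then obtain t where t: "N j = M * t" by (rule dvdE)
    have "t \<noteq> 1" using gt t by auto
    then obtain p where p: "prime p" "p dvd t" using prime_factor_nat by blast
    then have "M * p dvd N j" unfolding t by (simp add: mult_dvd_mono)
    then have "\<exists>p. prime p \<and> (\<exists>j. M * p dvd N j)" using p by blast
    then show ?thesis unfolding nextp_def by (rule someI_ex)
  qed
  show ?thesis
  proof (induction k)
    case 0
    have "Ms N 0 dvd N 0" by simp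
    then show ?case using step by blast
  next
    case (Suc k)
    then obtain j where "Ms N k dvd N j" by blast
    then have "\<exists>j. Ms N (Suc k) dvd N j" using step by simp
    then show ?case using step by blast
  qed
qed

lemma dist_alpha_bound:
  assumes "\<forall>i<K. r i = s i"
  shows "dist_alpha r s \<le> (1/2) ^ K"
proof -
  define t where "t i = (if r i \<noteq> s i then 1 else 0) / (2::real) ^ (Suc i)" for i
  have t0: "0 \<le> t i" for i unfolding t_def by simp
  have tle: "t i \<le> (1/2) ^ Suc i" for i unfolding t_def by (simp add: power_one_over)
  have gs: "summable (\<lambda>i. (1/2::real) ^ Suc i)" by (simp add: summable_geometric)
  have st: "summable t" by (rule summable_comparison_test'[OF gs]) (use t0 tle in auto)
  have "dist_alpha r s = suminf t" unfolding dist_alpha_def t_def ..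
  also have "\<dots> = (\<Sum>n. t (n + K)) + (\<Sum>i<K. t i)" by (rule suminf_split_initial_segment[OF st])
  also have "(\<Sum>i<K. t i) = 0" using assms unfolding t_def by simp
  also have "(\<Sum>n. t (n + K)) \<le> (\<Sum>n. (1/2::real) ^ Suc K * (1/2) ^ n)"
  proof (rule suminf_le)
    show "t (n + K) \<le> (1/2::real) ^ Suc K * (1/2) ^ n" for n
      using tle[of "n+K"] by (simp add: power_add[symmetric] add.commute)
    show "summable (\<lambda>n. t (n + K))" using st by (simp add: summable_iff_shift)
    show "summable (\<lambda>n. (1/2::real) ^ Suc K * (1/2) ^ n)"
      by (intro summable_mult summable_geometric) simp
  qed
  also have "(\<Sum>n. (1/2::real) ^ Suc K * (1/2) ^ n) = (1/2) ^ Suc K * (\<Sum>n. (1/2::real) ^ n)"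
    by (rule suminf_mult) (rule summable_geometric, simp)
  also have "(\<Sum>n. (1/2::real) ^ n) = 2"
    using suminf_geometric[of "1/2::real"] by simp
  also have "(1/2::real) ^ Suc K * 2 = (1/2) ^ K" by simp
  finally show ?thesis by simp
qed

locale dyn2 = dyn +
  assumes sens: "sensitive_on X f" and shad: "shadowing_on X f"
begin

definition ee :: "nat \<Rightarrow> real" where "ee j = 1 / real (Suc j)"
definition N :: "nat \<Rightarrow> nat" where "N j = per (ee j)"
definition cc :: "nat \<Rightarrow> 'a \<Rightarrow> nat" where "cc j = cyc (ee j)"
definition alph :: "nat \<Rightarrow> nat" where "alph i = nextp N (Ms N i)"
definition M :: "nat \<Rightarrow> nat" where "M = Ms N"
definition J :: "nat \<Rightarrow> nat" where "J k = (SOME j. M k dvd N j)"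
definition C :: "nat \<Rightarrow> 'a \<Rightarrow> nat" where "C k y = cc (J k) y mod M k"
definition code :: "'a \<Rightarrow> nat \<Rightarrow> nat" where "code y i = C (Suc i) y div M i"

lemma ee_pos: "ee j > 0" unfolding ee_def by simp
lemma ee_mono: "j \<le> j' \<Longrightarrow> ee j' \<le> ee j" unfolding ee_def by (simp add: frac_le)

lemma N_pos: "N j > 0" unfolding N_def using per_props[OF ee_pos] by simp
lemma N_mono: "j \<le> j' \<Longrightarrow> N j dvd N j'" unfolding N_def using per_mono[OF ee_pos ee_mono] by simp
lemma N_unb: "\<exists>j. N j > B"
proof -
  obtain e where e: "e > 0" "per e > B" using per_unbounded[OF sens shad] by blast
  obtain n where n: "n > 0" "inverse (real n) < e" using ex_inverse_of_nat_less[OF e(1)] by blast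
  define j where "j = n - 1"
  have "Suc j = n" using n unfolding j_def by simp
  then have "inverse (real (Suc j)) < e" using n by simp
  then have "ee j \<le> e" unfolding ee_def by (simp add: inverse_eq_divide)
  then have "per e dvd N j" unfolding N_def using per_mono[OF ee_pos] by simp
  then have "per e \<le> N j" using N_pos by (simp add: dvd_imp_le)
  then show ?thesis using e by (intro exI[of _ j]) simp
qed

lemma chain_props: "(\<exists>j. M k dvd N j) \<and> prime (alph k)"
  unfolding M_def alph_def by (rule prime_chain[OF N_pos N_mono N_unb])

lemma alph_prime: "prime (alph i)" using chain_props by simp
lemma alph_ge2: "alph i \<ge> 2" using alph_prime prime_ge_2_nat by blast
lemma M_0: "M 0 = 1" unfolding M_def by simp
lemma M_Suc: "M (Suc i) = M i * alph i" unfolding M_def alph_def by simp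
lemma M_pos: "M k > 0"
proof (induction k)
  case 0 then show ?case by (simp add: M_0)
next
  case (Suc k)
  have "alph k > 0" using alph_ge2[of k] by simp
  then show ?case using Suc by (simp add: M_Suc)
qed
lemma M_ge: "M k \<ge> 2 ^ k"
proof (induction k)
  case 0 then show ?case by (simp add: M_0)
next
  case (Suc k)
  have "2 ^ Suc k = 2 * 2 ^ k" by simp
  also have "\<dots> \<le> alph k * M k" using Suc alph_ge2[of k] by (intro mult_le_mono) auto
  finally show ?case by (simp add: M_Suc mult.commute)
qed
lemma M_dvd: "k \<le> k' \<Longrightarrow> M k dvd M k'"
proof (induction k' )
  case 0 then show ?case by simp
next
  case (Suc k') then show ?case by (auto simp: M_Suc le_Suc_eq)
qed

lemma J_dvd: "M k dvd N (J k)"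
  unfolding J_def using chain_props by (metis someI_ex)

lemma cc_compat: "j \<le> j' \<Longrightarrow> y \<in> X \<Longrightarrow> cc j' y mod N j = cc j y"
  unfolding cc_def N_def using cyc_compat[OF ee_pos ee_mono] by blast

lemma C_lt: "C k y < M k" unfolding C_def using M_pos by simp

lemma C_compat: assumes "k \<le> k'" "y \<in> X" shows "C k' y mod M k = C k y"
proof -
  define j where "j = max (J k) (J k')"
  have a: "cc j y mod N (J k) = cc (J k) y" using cc_compat[of "J k" j y] assms(2) unfolding j_def by simp
  have b: "cc j y mod N (J k') = cc (J k') y" using cc_compat[of "J k'" j y] assms(2) unfolding j_def by simp
  have "C k y = cc j y mod M k" unfolding C_def a[symmetric] using J_dvd by (simp add: mod_mod_cancel)
  moreover have "C k' y = cc j y mod M k'" unfolding C_def b[symmetric] using J_dvd by (simp add: mod_mod_cancel)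
  ultimately show ?thesis using M_dvd[OF assms(1)] by (simp add: mod_mod_cancel)
qed

lemma C_f: assumes "y \<in> X" shows "C k (f y) = Suc (C k y) mod M k"
proof -
  have "cc (J k) (f y) = Suc (cc (J k) y) mod N (J k)" unfolding cc_def N_def using cyc_f[OF ee_pos assms] .
  then show ?thesis unfolding C_def using J_dvd[of k] by (simp add: mod_mod_cancel mod_Suc_eq)
qed

lemma C_x0: "C k x0 = 0" unfolding C_def cc_def using cyc_x0[OF ee_pos] by simp

lemma C_loc: assumes "y \<in> X" shows "\<exists>r>0. \<forall>z\<in>X. dist z y < r \<longrightarrow> C k z = C k y"
  using cyc_loc[OF ee_pos assms, of "J k"] unfolding C_def cc_def by metis

lemma C_orbit: "C k ((f ^^ n) x0) = n mod M k"
proof (induction n)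
  case 0 then show ?case by (simp add: C_x0)
next
  case (Suc n)
  have "C k ((f ^^ Suc n) x0) = Suc (C k ((f ^^ n) x0)) mod M k"
    using C_f[OF funpow_in[OF fX x0X, of n]] by simp
  then show ?case using Suc by (simp add: mod_Suc_eq)
qed

lemma C_Suc: "y \<in> X \<Longrightarrow> C (Suc i) y = code y i * M i + C i y"
  unfolding code_def using C_compat[of i "Suc i" y] by (metis div_mult_mod_eq le_SucI order_refl)

lemma code_lt: "code y i < alph i"
  unfolding code_def using C_lt[of "Suc i" y] by (simp add: M_Suc less_mult_imp_div_less mult.commute)

lemma code_digit: assumes "i < K" "y \<in> X" shows "code y i = (C K y div M i) mod alph i"
proof -
  have "C (Suc i) y = C K y mod (M i * alph i)" using C_compat[of "Suc i" K y] assms by (simp add: M_Suc)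
  then show ?thesis unfolding code_def using digit_lemma[OF M_pos] by simp
qed

end

lemma carry_arith:
  fixes r a c m :: nat
  assumes "r < a" "c < m"
  shows "(r + (if Suc c = m then 1 else 0) \<ge> a) \<longleftrightarrow> (Suc (r * m + c) = m * a)"
proof (cases "Suc c = m")
  case True
  have "Suc (r * m + c) = (r + 1) * m" using True by simp
  moreover have "((r + 1) * m = m * a) \<longleftrightarrow> r + 1 = a"
  proof -
    have "m > 0" using True by simp
    then have "((r + 1) * m = a * m) \<longleftrightarrow> r + 1 = a" by (simp only: mult_cancel2) simp
    then show ?thesis by (simp only: mult.commute[of m a])
  qed
  ultimately show ?thesis using True assms by auto
next
  case False
  then have "Suc c < m" using assms by simp
  then have "Suc (r * m + c) < (r + 1) * m" by simp
  moreover have "(r + 1) * m \<le> a * m" using assms by (intro mult_le_mono1) simp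
  ultimately have "Suc (r * m + c) \<noteq> m * a" by (simp add: mult.commute)
  then show ?thesis using False assms by simp
qed

context dyn2
begin

lemma carry_code: assumes "y \<in> X" shows "carry alph (code y) i = (if Suc (C i y) = M i then 1 else 0)"
proof (induction i)
  case 0 then show ?case using C_lt[of 0 y] by (simp add: M_0)
next
  case (Suc i)
  have "carry alph (code y) (Suc i) = (if code y i + carry alph (code y) i \<ge> alph i then 1 else 0)" by simp
  also have "(code y i + carry alph (code y) i \<ge> alph i) \<longleftrightarrow> (Suc (code y i * M i + C i y) = M i * alph i)"
    unfolding Suc by (rule carry_arith[OF code_lt C_lt])
  finally show ?case using C_Suc[OF assms, of i] by (simp add: M_Suc)
qed

lemma g_code: assumes "y \<in> X" shows "g_alpha alph (code y) = code (f y)"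
proof
  fix i
  have cle: "Suc (C i y) \<le> M i" using C_lt[of i y] by simp
  have cdiv: "Suc (C i y) div M i = (if Suc (C i y) = M i then 1 else 0)"
    using cle M_pos[of i] by auto
  have "Suc (C (Suc i) y) = Suc (C i y) + code y i * M i" using C_Suc[OF assms, of i] by simp
  moreover have "(Suc (C i y) + code y i * M i) div M i = code y i + Suc (C i y) div M i"
    by (rule div_mult_self1) (use M_pos[of i] in simp)
  ultimately have dv: "Suc (C (Suc i) y) div M i = code y i + carry alph (code y) i"
    using cdiv carry_code[OF assms, of i] by simp
  have "code (f y) i = (Suc (C (Suc i) y) mod (M i * alph i)) div M i"
    unfolding code_def C_f[OF assms] by (simp add: M_Suc)
  also have "\<dots> = (Suc (C (Suc i) y) div M i) mod alph i" by (rule digit_lemma[OF M_pos])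
  finally show "g_alpha alph (code y) i = code (f y) i" unfolding g_alpha_def dv by simp
qed

lemma C_det: assumes "y \<in> X" "z \<in> X" "code y = code z" shows "C k y = C k z"
proof (induction k)
  case 0 then show ?case using C_lt[of 0 y] C_lt[of 0 z] by (simp add: M_0)
next
  case (Suc k) then show ?case using C_Suc[OF assms(1), of k] C_Suc[OF assms(2), of k] assms(3) by simp
qed

lemma code_inj: "inj_on code {(f ^^ n) x0 | n. True}"
proof (rule inj_onI)
  fix y z assume y: "y \<in> {(f ^^ n) x0 | n. True}" and z: "z \<in> {(f ^^ n) x0 | n. True}" and eq: "code y = code z"
  then obtain n n' where nn: "y = (f ^^ n) x0" "z = (f ^^ n') x0" by blast
  have "C (n + n') y = C (n + n') z" using C_det[OF _ _ eq] nn funpow_in[OF fX x0X] by simp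
  then have "n mod M (n + n') = n' mod M (n + n')" using nn C_orbit by simp
  moreover have "n + n' < M (n + n')" using M_ge[of "n + n'"] less_exp[of "n + n'"] by (rule order.strict_trans2[rotated])
  ultimately have "n = n'" by simp
  then show "y = z" using nn by simp
qed

lemma code_cont: "continuous_into_Delta X code"
  unfolding continuous_into_Delta_def
proof (intro ballI allI impI)
  fix y :: 'a and e :: real assume y: "y \<in> X" and e: "e > 0"
  obtain K where K: "(1/2::real) ^ K < e" using real_arch_pow_inv[OF e, of "1/2"] by auto
  obtain r where r: "r > 0" "\<forall>z\<in>X. dist z y < r \<longrightarrow> C K z = C K y" using C_loc[OF y, of K] by blast
  show "\<exists>d>0. \<forall>z\<in>X. dist z y < d \<longrightarrow> dist_alpha (code z) (code y) < e"
  proof (intro exI[of _ r] conjI ballI impI)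
    show "r > 0" by (rule r(1))
    fix z assume z: "z \<in> X" "dist z y < r"
    have "\<forall>i<K. code z i = code y i" using code_digit z(1) y r(2) z by simp
    then have "dist_alpha (code z) (code y) \<le> (1/2) ^ K" by (rule dist_alpha_bound)
    then show "dist_alpha (code z) (code y) < e" using K by simp
  qed
qed

lemma code_Delta: "code ` X \<subseteq> Delta alph"
  unfolding Delta_def using code_lt by auto

lemma main:
  "\<exists>(\<alpha>::nat \<Rightarrow> nat) (\<pi>::'a \<Rightarrow> nat \<Rightarrow> nat).
           (\<forall>i. prime (\<alpha> i)) \<and>
           \<pi> ` X \<subseteq> Delta \<alpha> \<and>
           continuous_into_Delta X \<pi> \<and>
           (\<forall>x\<in>X. g_alpha \<alpha> (\<pi> x) = \<pi> (f x)) \<and>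
           (\<exists>D\<subseteq>X. X \<subseteq> closure D \<and> inj_on \<pi> D)"
proof (rule exI[of _ alph], rule exI[of _ code], intro conjI)
  show "\<forall>i. prime (alph i)" using alph_prime by simp
  show "code ` X \<subseteq> Delta alph" by (rule code_Delta)
  show "continuous_into_Delta X code" by (rule code_cont)
  show "\<forall>x\<in>X. g_alpha alph (code x) = code (f x)" using g_code by simp
  show "\<exists>D\<subseteq>X. X \<subseteq> closure D \<and> inj_on code D"
  proof (intro exI conjI)
    show "{(f ^^ n) x0 | n. True} \<subseteq> X" using funpow_in[OF fX x0X] by auto
    show "X \<subseteq> closure {(f ^^ n) x0 | n. True}" using mini x0X by (simp add: minimal_on_def)
    show "inj_on code {(f ^^ n) x0 | n. True}" by (rule code_inj)
  qed
qed

end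

theorem theorem4p11:
  fixes X :: "'a::metric_space set" and f :: "'a \<Rightarrow> 'a"
  assumes "compact X" and "f ` X \<subseteq> X" and "continuous_on X f"
    and "sensitive_on X f" and "minimal_on X f" and "shadowing_on X f"
  shows "\<exists>(\<alpha>::nat \<Rightarrow> nat) (\<pi>::'a \<Rightarrow> nat \<Rightarrow> nat).
           (\<forall>i. prime (\<alpha> i)) \<and>
           \<pi> ` X \<subseteq> Delta \<alpha> \<and>
           continuous_into_Delta X \<pi> \<and>
           (\<forall>x\<in>X. g_alpha \<alpha> (\<pi> x) = \<pi> (f x)) \<and>
           (\<exists>D\<subseteq>X. X \<subseteq> closure D \<and> inj_on \<pi> D)"
proof (cases "X = {}")
  case True
  show ?thesis
    by (rule exI[of _ "\<lambda>_. 2"], rule exI[of _ "\<lambda>_ _. 0"])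
      (simp add: True continuous_into_Delta_def)
next
  case False
  then obtain x0 where x0: "x0 \<in> X" by blast
  interpret dyn2 X f x0
    by unfold_locales (use assms x0 in auto)
  show ?thesis by (rule main)
qed

end
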